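(* Let $(X_k)_{k\ge1}$ be nonnegative interarrival times with $S_k=X_1+\dots+X_k$, counting process $N(t)=\max\{k:S_k\le t\}$, and let $T$ be a nonnegative random variable independent of $(X_k)$. Assume: (a) $T$ is DFR; (b) $T$ and $X_1$ do not have $0$ as a common discontinuity point (i.e. not both $P(T=0)>0$ and $P(X_1=0)>0$); (c) $(X_1,X_2)$ is associated and $X_2\le_{ST}X_1$; (d) for every $n=1,2,\dots$ there exists an $N_n$-distributional version $\{(Z^{\mathbf x}_{n+1},Z^{\mathbf x}_{n+2}):\mathbf x\in N_n\}$ of $(X_{n+1},X_{n+2})$ given $(X_1,\dots,X_n)$ such that, for all $\mathbf x\in N_n$, $(Z^{\mathbf x}_{n+1},Z^{\mathbf x}_{n+2})$ is associated and $Z^{\mathbf x}_{n+2}\le_{ST}Z^{\mathbf x}_{n+1}$. Then $N(T)$ is discrete DFR.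
   Context: A random vector $\mathbf Y$ is associated if $\mathrm{Cov}(f(\mathbf Y),g(\mathbf Y))\ge0$ for all coordinatewise increasing $f,g$ for which the expectations exist. A survival function $\overline G$ is DFR if $t\mapsto\overline G(z+t)/\overline G(t)$ is increasing for every $z\ge0$. $X\le_{ST}Y$ means $P(X>t)\le P(Y>t)$ for all $t$. A $\{0,1,\dots\}$-valued $N$ is discrete DFR if $P(N\ge n+1)^2\le P(N\ge n)P(N\ge n+2)$ for all $n\ge0$. Let $F_n$ be the law of $(X_1,\dots,X_n)$ and $N_n\subseteq\mathbb R_+^n$ Borel with $P((X_1,\dots,X_n)\in N_n)=1$. A family $\{\mu^{\mathbf x}:\mathbf x\in N_n\}$ of probability measures on $\mathbb R_+^2$, with $\mathbf x\mapsto\mu^{\mathbf x}(B)$ measurable, is an $N_n$ regular conditional distribution of $(X_{n+1},X_{n+2})$ given $(X_1,\dots,X_n)$ if $P((X_1,\dots,X_n)\in A,(X_{n+1},X_{n+2})\in B)=\int_A\mu^{\mathbf x}(B)\,dF_n(\mathbf x)$ for all Borel $A\subseteq N_n$, $B\subseteq\mathbb R_+^2$; an $N_n$-distributional version is a family of random vectors $(Z^{\mathbf x}_{n+1},Z^{\mathbf x}_{n+2})$ with law $\mu^{\mathbf x}$ for such a regular conditional distribution. *)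

theory Defs
  imports "HOL-Probability.Probability"
begin

definition coord_incr :: "(real \<times> real \<Rightarrow> real) \<Rightarrow> bool" where
  "coord_incr f \<longleftrightarrow> (\<forall>a b c d. a \<le> c \<longrightarrow> b \<le> d \<longrightarrow> f (a, b) \<le> f (c, d))"

definition associated :: "'a measure \<Rightarrow> ('a \<Rightarrow> real \<times> real) \<Rightarrow> bool" where
  "associated M Y \<longleftrightarrow>
     (\<forall>f g. coord_incr f \<and> coord_incr g \<and>
        integrable M (\<lambda>w. f (Y w)) \<and> integrable M (\<lambda>w. g (Y w)) \<and>
        integrable M (\<lambda>w. f (Y w) * g (Y w)) \<longrightarrow>
        (\<integral>w. f (Y w) * g (Y w) \<partial>M) - (\<integral>w. f (Y w) \<partial>M) * (\<integral>w. g (Y w) \<partial>M) \<ge> 0)"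

definition st_le :: "'a measure \<Rightarrow> ('a \<Rightarrow> real) \<Rightarrow> ('a \<Rightarrow> real) \<Rightarrow> bool" where
  "st_le M Y Z \<longleftrightarrow> (\<forall>t. measure M {w\<in>space M. Y w > t} \<le> measure M {w\<in>space M. Z w > t})"

definition surv :: "'a measure \<Rightarrow> ('a \<Rightarrow> real) \<Rightarrow> real \<Rightarrow> real" where
  "surv M T t = measure M {w\<in>space M. T w > t}"

definition DFR :: "'a measure \<Rightarrow> ('a \<Rightarrow> real) \<Rightarrow> bool" where
  "DFR M T \<longleftrightarrow> (\<forall>z\<ge>0. mono_on {0..} (\<lambda>t. surv M T (z + t) / surv M T t))"

definition disc_DFR :: "'a measure \<Rightarrow> ('a \<Rightarrow> enat) \<Rightarrow> bool" where
  "disc_DFR M N \<longleftrightarrow> (\<forall>n::nat.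
     (measure M {w\<in>space M. N w \<ge> enat (n+1)})\<^sup>2 \<le>
       measure M {w\<in>space M. N w \<ge> enat n} * measure M {w\<in>space M. N w \<ge> enat (n+2)})"

definition partial_sum :: "(nat \<Rightarrow> 'a \<Rightarrow> real) \<Rightarrow> nat \<Rightarrow> 'a \<Rightarrow> real" where
  "partial_sum X k w = (\<Sum>i\<in>{1..k}. X i w)"

definition counting :: "(nat \<Rightarrow> 'a \<Rightarrow> real) \<Rightarrow> real \<Rightarrow> 'a \<Rightarrow> enat" where
  "counting X t w = Sup {enat k | k. partial_sum X k w \<le> t}"

abbreviation Rn :: "nat \<Rightarrow> (nat \<Rightarrow> real) measure" where
  "Rn n \<equiv> PiM {1..n} (\<lambda>_. (borel :: real measure))"

definition first_n :: "(nat \<Rightarrow> 'a \<Rightarrow> real) \<Rightarrow> nat \<Rightarrow> 'a \<Rightarrow> (nat \<Rightarrow> real)" where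
  "first_n X n w = (\<lambda>i\<in>{1..n}. X i w)"

definition quadrant :: "(real \<times> real) set" where
  "quadrant = {0..} \<times> {0..}"

text \<open>Nn regular conditional distribution mu of (X_{n+1},X_{n+2}) given (X_1,...,X_n).\<close>
definition is_rcd :: "'a measure \<Rightarrow> (nat \<Rightarrow> 'a \<Rightarrow> real) \<Rightarrow> nat \<Rightarrow> (nat \<Rightarrow> real) set
     \<Rightarrow> ((nat \<Rightarrow> real) \<Rightarrow> (real \<times> real) measure) \<Rightarrow> bool" where
  "is_rcd M X n Nn \<mu> \<longleftrightarrow>
     Nn \<in> sets (Rn n) \<and> Nn \<subseteq> {x. \<forall>i\<in>{1..n}. 0 \<le> x i} \<and>
     measure M {w\<in>space M. first_n X n w \<in> Nn} = 1 \<and>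
     (\<forall>x\<in>Nn. prob_space (\<mu> x) \<and> sets (\<mu> x) = sets (borel :: (real \<times> real) measure)
               \<and> emeasure (\<mu> x) quadrant = 1) \<and>
     (\<forall>B\<in>sets (borel :: (real \<times> real) measure). B \<subseteq> quadrant \<longrightarrow>
        (\<lambda>x. emeasure (\<mu> x) B) \<in> borel_measurable (restrict_space (Rn n) Nn)) \<and>
     (\<forall>A\<in>sets (Rn n). A \<subseteq> Nn \<longrightarrow>
       (\<forall>B\<in>sets (borel :: (real \<times> real) measure). B \<subseteq> quadrant \<longrightarrow>
          emeasure M {w\<in>space M. first_n X n w \<in> A \<and> (X (n+1) w, X (n+2) w) \<in> B}
          = (\<integral>\<^sup>+ x. indicator A x * emeasure (\<mu> x) B \<partial>(distr M (Rn n) (first_n X n)))))"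

end

theory Submission
  imports Defs
begin

context prob_space begin

lemma surv_anti:
  assumes T: "T \<in> borel_measurable M" and "t1 \<le> t2"
  shows "surv M T t2 \<le> surv M T t1"
  unfolding surv_def using assms by (intro finite_measure_mono) auto

lemma surv_tendsto:
  assumes T[measurable]: "T \<in> borel_measurable M" and c: "0 < c"
  shows "(\<lambda>m. surv M T (u - c / real (Suc m))) \<longlonglongrightarrow> measure M {w\<in>space M. u \<le> T w}"
proof -
  let ?A = "\<lambda>m. {w\<in>space M. u - c / real (Suc m) < T w}"
  have dec: "decseq ?A"
  proof (rule decseq_SucI)
    fix m
    have "c / real (Suc (Suc m)) \<le> c / real (Suc m)"
      using c by (intro divide_left_mono) auto
    then show "?A (Suc m) \<subseteq> ?A m" by auto
  qed
  have int: "(\<Inter>m. ?A m) = {w\<in>space M. u \<le> T w}"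
  proof safe
    fix w assume h: "w \<in> (\<Inter>m. ?A m)"
    then show "w \<in> space M" by auto
    show "u \<le> T w"
    proof (rule ccontr)
      assume "\<not> u \<le> T w"
      then have "0 < (u - T w) / c" using c by simp
      then obtain m where "inverse (real (Suc m)) < (u - T w) / c"
        using reals_Archimedean by blast
      then have "c / real (Suc m) < u - T w" using c
        by (simp add: field_simps)
      moreover have "u - c / real (Suc m) < T w" using h by auto
      ultimately show False by simp
    qed
  next
    fix w m assume "w \<in> space M" "u \<le> T w"
    moreover have "0 < c / real (Suc m)" using c by simp
    ultimately show "u - c / real (Suc m) < T w" by linarith
  qed
  have ev: "?A m \<in> sets M" for m by measurable
  have "(\<lambda>m. measure M (?A m)) \<longlonglongrightarrow> measure M (\<Inter>m. ?A m)"
    by (rule finite_Lim_measure_decseq[OF _ dec]) (use ev in auto)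
  then show ?thesis unfolding surv_def int .
qed

lemma DFR_step:
  assumes T[measurable]: "T \<in> borel_measurable M" and D: "DFR M T"
    and "0 \<le> t" "0 \<le> a" "0 \<le> b"
  shows "surv M T (t + a) * surv M T (t + b) \<le> surv M T t * surv M T (t + a + b)"
proof (cases "surv M T (t + a) = 0")
  case True
  then show ?thesis by (simp add: surv_def)
next
  case False
  have pos1: "0 < surv M T (t + a)" using False measure_nonneg[of M] by (simp add: surv_def less_le)
  have pos0: "0 < surv M T t" using pos1 surv_anti[OF T, of t "t+a"] assms by linarith
  have "surv M T (b + t) / surv M T t \<le> surv M T (b + (t + a)) / surv M T (t + a)"
    using D assms unfolding DFR_def mono_on_def by auto
  then have "surv M T (b + t) * surv M T (t + a) \<le> surv M T (b + (t + a)) * surv M T t"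
    using pos0 pos1 by (simp add: field_simps)
  then show ?thesis by (simp add: algebra_simps)
qed

lemma g_supermod:
  assumes T[measurable]: "T \<in> borel_measurable M" and D: "DFR M T"
    and s: "0 \<le> s" and a: "0 \<le> a" and b: "0 \<le> b"
  defines "g \<equiv> \<lambda>u. measure M {w\<in>space M. u \<le> T w}"
  shows "g (s + a) * g (s + b) \<le> g s * g (s + a + b)"
proof (cases "a = 0 \<or> b = 0")
  case True
  then show ?thesis by (auto simp: algebra_simps)
next
  case False
  then have a': "0 < a" and b': "0 < b" using a b by auto
  have L1: "(\<lambda>m. surv M T (s + a - 1 / real (Suc m)) * surv M T (s + b - 1 / real (Suc m)))
      \<longlonglongrightarrow> g (s + a) * g (s + b)"
    unfolding g_def by (intro tendsto_mult surv_tendsto T) auto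
  have L2: "(\<lambda>m. surv M T s * surv M T (s + a + b - 2 / real (Suc m)))
      \<longlonglongrightarrow> surv M T s * g (s + a + b)"
    unfolding g_def by (intro tendsto_mult surv_tendsto T tendsto_const) auto
  have ev: "eventually (\<lambda>m. 1 / real (Suc m) \<le> min a b) sequentially"
  proof -
    obtain m0 where "inverse (real (Suc m0)) < min a b"
      using reals_Archimedean[of "min a b"] a' b' by auto
    then show ?thesis
      unfolding eventually_sequentially
      apply (rule_tac exI[of _ m0])
      apply clarify
      apply (rule order_trans[of _ "inverse (real (Suc m0))"])
      by (auto simp: field_simps)
  qed
  have "eventually (\<lambda>m. surv M T (s + a - 1 / real (Suc m)) * surv M T (s + b - 1 / real (Suc m))
      \<le> surv M T s * surv M T (s + a + b - 2 / real (Suc m))) sequentially"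
    using ev
  proof eventually_elim
    case (elim m)
    let ?e = "1 / real (Suc m)"
    have "surv M T (s + (a - ?e)) * surv M T (s + (b - ?e)) \<le> surv M T s * surv M T (s + (a - ?e) + (b - ?e))"
      using elim by (intro DFR_step[OF T D s]) auto
    moreover have "2 / real (Suc m) = ?e + ?e" by simp
    then have "s + (a - ?e) + (b - ?e) = s + a + b - 2 / real (Suc m)" by simp
    ultimately show ?case by (simp add: algebra_simps)
  qed
  then have "g (s + a) * g (s + b) \<le> surv M T s * g (s + a + b)"
    using tendsto_le[OF _ L2 L1] by simp
  also have "\<dots> \<le> g s * g (s + a + b)"
    unfolding g_def surv_def
    by (intro mult_right_mono finite_measure_mono) auto
  finally show ?thesis .
qed

end

context prob_space begin

definition gT :: "('a \<Rightarrow> real) \<Rightarrow> real \<Rightarrow> real" where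
  "gT T u = measure M {w\<in>space M. u \<le> T w}"

lemma gT_anti: assumes [measurable]: "T \<in> borel_measurable M" and "u \<le> v" shows "gT T v \<le> gT T u"
  unfolding gT_def using assms(2) by (intro finite_measure_mono) auto

lemma gT_bounds: "0 \<le> gT T u" "gT T u \<le> 1"
  unfolding gT_def by auto

lemma gT_measurable[measurable]: assumes [measurable]: "T \<in> borel_measurable M"
  shows "gT T \<in> borel_measurable borel"
proof -
  have "(\<lambda>u. - gT T u) \<in> borel_measurable borel"
    by (rule borel_measurable_mono) (auto simp: mono_def intro: gT_anti)
  then have "(\<lambda>u. - (- gT T u)) \<in> borel_measurable borel" by measurable
  then show ?thesis by simp
qed

lemma gT_integral: assumes [measurable]: "T \<in> borel_measurable M"
  shows "gT T u = (\<integral>t. (if u \<le> t then 1 else 0 :: real) \<partial>distr M borel T)"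
proof -
  have "(\<lambda>t. if u \<le> t then 1 else 0 :: real) = indicator {u..}"
    by (auto simp: indicator_def)
  then have "(\<integral>t. (if u \<le> t then 1 else 0 :: real) \<partial>distr M borel T) = measure (distr M borel T) {u..}"
    by simp
  also have "\<dots> = measure M (T -` {u..} \<inter> space M)" by (rule measure_distr) auto
  also have "\<dots> = gT T u" unfolding gT_def by (auto intro: arg_cong[where f="measure M"])
  finally show ?thesis ..
qed

lemma gT_fubini:
  assumes [measurable]: "T \<in> borel_measurable M" and P: "prob_space P"
    and Y[measurable]: "Y \<in> borel_measurable P"
  shows "(\<integral>p. gT T (s + Y p) \<partial>P) = (\<integral>t. measure P {p\<in>space P. Y p \<le> t - s} \<partial>distr M borel T)"
proof -
  let ?PT = "distr M borel T"
  interpret P: prob_space P by fact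
  interpret PT: prob_space ?PT by (rule prob_space_distr) simp
  interpret PP: pair_prob_space P ?PT ..
  let ?f = "\<lambda>p t. (if s + Y p \<le> t then 1 else 0 :: real)"
  have int: "integrable (P \<Otimes>\<^sub>M ?PT) (case_prod ?f)"
    by (rule PP.integrable_const_bound[where B=1]) auto
  have "(\<integral>p. gT T (s + Y p) \<partial>P) = (\<integral>p. (\<integral>t. ?f p t \<partial>?PT) \<partial>P)"
    by (simp add: gT_integral)
  also have "\<dots> = (\<integral>t. (\<integral>p. ?f p t \<partial>P) \<partial>?PT)"
    by (rule PP.Fubini_integral[symmetric]) (rule int)
  also have "\<dots> = (\<integral>t. measure P {p\<in>space P. Y p \<le> t - s} \<partial>?PT)"
  proof (rule Bochner_Integration.integral_cong[OF refl])
    fix t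
    have "(\<lambda>p. ?f p t) = indicator {p. Y p \<le> t - s}" by (auto simp: indicator_def)
    then show "(\<integral>p. ?f p t \<partial>P) = measure P {p\<in>space P. Y p \<le> t - s}"
      by (auto intro: arg_cong[where f="measure P"])
  qed
  finally show ?thesis .
qed

lemma gT_st:
  assumes [measurable]: "T \<in> borel_measurable M" and P: "prob_space P"
    and [measurable]: "Y1 \<in> borel_measurable P" "Y2 \<in> borel_measurable P"
    and st: "st_le P Y2 Y1"
  shows "(\<integral>p. gT T (s + Y1 p) \<partial>P) \<le> (\<integral>p. gT T (s + Y2 p) \<partial>P)"
proof -
  interpret P: prob_space P by fact
  interpret PT: prob_space "distr M borel T" by (rule prob_space_distr) simp
  have le: "measure P {p\<in>space P. Y1 p \<le> c} \<le> measure P {p\<in>space P. Y2 p \<le> c}" for c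
  proof -
    have e1: "{p\<in>space P. Y1 p \<le> c} = space P - {p\<in>space P. c < Y1 p}" by auto
    have e2: "{p\<in>space P. Y2 p \<le> c} = space P - {p\<in>space P. c < Y2 p}" by auto
    have "measure P {p\<in>space P. Y2 p > c} \<le> measure P {p\<in>space P. Y1 p > c}"
      using st unfolding st_le_def by auto
    then show ?thesis unfolding e1 e2
      by (subst P.prob_compl, measurable)+
  qed
  have m: "(\<lambda>t. measure P {p\<in>space P. Y p \<le> t - s}) \<in> borel_measurable borel"
    if [measurable]: "Y \<in> borel_measurable P" for Y
  proof -
    have "mono (\<lambda>t. measure P {p\<in>space P. Y p \<le> t - s})"
      unfolding mono_def by (auto intro!: P.finite_measure_mono)
    then show ?thesis by (rule borel_measurable_mono)
  qed
  show ?thesis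
    unfolding gT_fubini[OF _ P, of T Y1 s, simplified] gT_fubini[OF _ P, of T Y2 s, simplified]
  proof (rule integral_mono)
    show "integrable (distr M borel T) (\<lambda>t. measure P {p\<in>space P. Y1 p \<le> t - s})"
      by (rule PT.integrable_const_bound[where B=1]) (auto intro: m)
    show "integrable (distr M borel T) (\<lambda>t. measure P {p\<in>space P. Y2 p \<le> t - s})"
      by (rule PT.integrable_const_bound[where B=1]) (auto intro: m)
  qed (rule le)
qed

end

context prob_space begin

lemma gT_assoc:
  assumes [measurable]: "T \<in> borel_measurable M" and P: "prob_space P"
    and [measurable]: "Y1 \<in> borel_measurable P" "Y2 \<in> borel_measurable P"
    and A: "associated P (\<lambda>p. (Y1 p, Y2 p))"
  shows "(\<integral>p. gT T (s + Y1 p) \<partial>P) * (\<integral>p. gT T (s + Y2 p) \<partial>P)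
          \<le> (\<integral>p. gT T (s + Y1 p) * gT T (s + Y2 p) \<partial>P)"
proof -
  interpret P: prob_space P by fact
  let ?f = "\<lambda>z::real\<times>real. - gT T (s + fst z)"
  let ?g = "\<lambda>z::real\<times>real. - gT T (s + snd z)"
  have ci: "coord_incr ?f" "coord_incr ?g"
    unfolding coord_incr_def by (auto intro: gT_anti)
  have bnd: "\<bar>gT T u\<bar> \<le> 1" for u using gT_bounds[of T u] by auto
  have bnd2: "\<bar>gT T u\<bar> * \<bar>gT T v\<bar> \<le> 1" for u v using bnd[of u] bnd[of v] by (intro mult_le_one) auto
  have i1: "integrable P (\<lambda>w. ?f (Y1 w, Y2 w))"
    by (rule P.integrable_const_bound[where B=1]) (auto simp: bnd)
  have i2: "integrable P (\<lambda>w. ?g (Y1 w, Y2 w))"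
    by (rule P.integrable_const_bound[where B=1]) (auto simp: bnd)
  have i3: "integrable P (\<lambda>w. ?f (Y1 w, Y2 w) * ?g (Y1 w, Y2 w))"
    by (rule P.integrable_const_bound[where B=1]) (auto simp: bnd2 abs_mult)
  have "(\<integral>w. ?f (Y1 w, Y2 w) * ?g (Y1 w, Y2 w) \<partial>P) - (\<integral>w. ?f (Y1 w, Y2 w) \<partial>P) * (\<integral>w. ?g (Y1 w, Y2 w) \<partial>P) \<ge> 0"
    using A ci i1 i2 i3 unfolding associated_def by blast
  then show ?thesis by simp
qed

lemma pointwise_ineq:
  assumes [measurable]: "T \<in> borel_measurable M" and D: "DFR M T" and P: "prob_space P"
    and [measurable]: "Y1 \<in> borel_measurable P" "Y2 \<in> borel_measurable P"
    and nn: "AE p in P. 0 \<le> Y1 p \<and> 0 \<le> Y2 p"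
    and A: "associated P (\<lambda>p. (Y1 p, Y2 p))" and st: "st_le P Y2 Y1" and s: "0 \<le> s"
  shows "(\<integral>p. gT T (s + Y1 p) \<partial>P)\<^sup>2 \<le> gT T s * (\<integral>p. gT T (s + Y1 p + Y2 p) \<partial>P)"
proof -
  interpret P: prob_space P by fact
  have bnd: "\<bar>gT T u\<bar> \<le> 1" for u using gT_bounds[of T u] by auto
  have bnd2: "\<bar>gT T u\<bar> * \<bar>gT T v\<bar> \<le> 1" for u v using bnd[of u] bnd[of v] by (intro mult_le_one) auto
  let ?m1 = "\<integral>p. gT T (s + Y1 p) \<partial>P"
  let ?m2 = "\<integral>p. gT T (s + Y2 p) \<partial>P"
  have m1: "0 \<le> ?m1" by (intro integral_nonneg_AE) (auto simp: gT_bounds)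
  have "?m1\<^sup>2 = ?m1 * ?m1" by (simp add: power2_eq_square)
  also have "\<dots> \<le> ?m1 * ?m2"
    by (intro mult_left_mono m1 gT_st[OF _ P]) (use st in auto)
  also have "\<dots> \<le> (\<integral>p. gT T (s + Y1 p) * gT T (s + Y2 p) \<partial>P)"
    by (rule gT_assoc[OF _ P _ _ A]) auto
  also have "\<dots> \<le> (\<integral>p. gT T s * gT T (s + Y1 p + Y2 p) \<partial>P)"
  proof (rule integral_mono_AE)
    show "integrable P (\<lambda>p. gT T (s + Y1 p) * gT T (s + Y2 p))"
      by (rule P.integrable_const_bound[where B=1]) (auto simp: bnd2 abs_mult)
    show "integrable P (\<lambda>p. gT T s * gT T (s + Y1 p + Y2 p))"
      by (rule P.integrable_const_bound[where B=1]) (auto simp: bnd2 abs_mult)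
    show "AE p in P. gT T (s + Y1 p) * gT T (s + Y2 p) \<le> gT T s * gT T (s + Y1 p + Y2 p)"
      using nn
    proof eventually_elim
      case (elim p)
      then show ?case using g_supermod[OF _ D s, of "Y1 p" "Y2 p"] unfolding gT_def by simp
    qed
  qed
  also have "\<dots> = gT T s * (\<integral>p. gT T (s + Y1 p + Y2 p) \<partial>P)" by simp
  finally show ?thesis .
qed

end

lemma CS_like:
  fixes f0 f1 f2 :: "'b \<Rightarrow> real"
  assumes P: "prob_space F"
    and [measurable]: "f0 \<in> borel_measurable F" "f1 \<in> borel_measurable F" "f2 \<in> borel_measurable F"
    and b: "\<And>x. x \<in> space F \<Longrightarrow> 0 \<le> f0 x \<and> f0 x \<le> 1 \<and> 0 \<le> f1 x \<and> f1 x \<le> 1 \<and> 0 \<le> f2 x \<and> f2 x \<le> 1"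
    and ineq: "AE x in F. (f1 x)\<^sup>2 \<le> f0 x * f2 x"
  shows "(\<integral>x. f1 x \<partial>F)\<^sup>2 \<le> (\<integral>x. f0 x \<partial>F) * (\<integral>x. f2 x \<partial>F)"
proof -
  interpret prob_space F by fact
  have int: "integrable F f" if "f \<in> borel_measurable F" "\<And>x. x \<in> space F \<Longrightarrow> \<bar>f x\<bar> \<le> 1" for f :: "'b \<Rightarrow> real"
    using that by (intro integrable_const_bound[where B=1]) (auto intro!: AE_I2)
  have i0: "integrable F f0" and i1: "integrable F f1" and i2: "integrable F f2"
    using b by (auto intro!: int)
  let ?I0 = "\<integral>x. f0 x \<partial>F" and ?I1 = "\<integral>x. f1 x \<partial>F" and ?I2 = "\<integral>x. f2 x \<partial>F"
  have I0: "0 \<le> ?I0" and I1: "0 \<le> ?I1" and I2: "0 \<le> ?I2"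
    using b by (auto intro!: integral_nonneg_AE AE_I2)
  have key: "2 * l * ?I1 \<le> l\<^sup>2 * ?I0 + ?I2" if l: "0 < l" for l
  proof -
    have pw: "2 * l * f1 x \<le> l\<^sup>2 * f0 x + f2 x" if x: "x \<in> space F" "(f1 x)\<^sup>2 \<le> f0 x * f2 x" for x
    proof -
      have nn: "0 \<le> f0 x" "0 \<le> f1 x" "0 \<le> f2 x" using b x by auto
      have "0 \<le> (l * f0 x - f1 x)\<^sup>2" by simp
      then have "2 * l * f1 x * f0 x \<le> l\<^sup>2 * f0 x * f0 x + (f1 x)\<^sup>2"
        by (simp add: power2_eq_square algebra_simps)
      also have "\<dots> \<le> l\<^sup>2 * f0 x * f0 x + f0 x * f2 x" using x by simp
      finally have h: "f0 x * (2 * l * f1 x) \<le> f0 x * (l\<^sup>2 * f0 x + f2 x)"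
        by (simp add: algebra_simps)
      show ?thesis
      proof (cases "f0 x = 0")
        case True
        then have "(f1 x)\<^sup>2 \<le> 0" using x by simp
        then have "f1 x = 0" by (auto simp: power2_eq_square mult_le_0_iff)
        then show ?thesis using nn True by simp
      next
        case False
        then show ?thesis using h nn by (simp add: mult_le_cancel_left)
      qed
    qed
    have "(\<integral>x. 2 * l * f1 x \<partial>F) \<le> (\<integral>x. l\<^sup>2 * f0 x + f2 x \<partial>F)"
      using ineq by (intro integral_mono_AE) (auto intro!: i0 i1 i2 pw)
    then show ?thesis using i0 i2 by simp
  qed
  show ?thesis
  proof (cases "?I1 = 0")
    case True then show ?thesis using I0 I2 by simp
  next
    case False
    then have I1p: "0 < ?I1" using I1 by simp
    show ?thesis
    proof (cases "?I0 = 0")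
      case True
      have "2 * ((?I2 + 1) / ?I1) * ?I1 \<le> ((?I2 + 1) / ?I1)\<^sup>2 * ?I0 + ?I2"
        using I1p I2 by (intro key) auto
      then show ?thesis using True I1p I2 by simp
    next
      case False
      then have I0p: "0 < ?I0" using I0 by simp
      have "2 * (?I1 / ?I0) * ?I1 \<le> (?I1 / ?I0)\<^sup>2 * ?I0 + ?I2"
        using I1p I0p by (intro key) auto
      then have "2 * ?I1\<^sup>2 / ?I0 \<le> ?I1\<^sup>2 / ?I0 + ?I2"
        using I0p by (simp add: power2_eq_square field_simps)
      then have "?I1\<^sup>2 / ?I0 \<le> ?I2" by simp
      then show ?thesis using I0p by (simp add: field_simps)
    qed
  qed
qed

context prob_space begin

lemma indep_T_sum:
  assumes X[measurable]: "\<forall>k\<ge>1. X k \<in> borel_measurable M"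
    and T[measurable]: "T \<in> borel_measurable M"
    and ind: "indep_set
           {T -` B \<inter> space M | B. B \<in> sets (borel :: real measure)}
           {(\<lambda>w. \<lambda>k\<in>{1..}. X k w) -` C \<inter> space M | C. C \<in> sets (PiM {1..} (\<lambda>_. (borel :: real measure)))}"
  shows "measure M {w\<in>space M. partial_sum X n w \<le> T w} = (\<integral>w. gT T (partial_sum X n w) \<partial>M)"
proof -
  let ?Xs = "\<lambda>w. \<lambda>k\<in>{1..}. X k w"
  let ?PI = "PiM {1..} (\<lambda>_. (borel :: real measure))"
  have Xs[measurable]: "?Xs \<in> measurable M ?PI"
    by (rule measurable_restrict) (use X in auto)
  let ?T' = "\<lambda>w. \<lambda>k\<in>{1::nat..}. T w"
  have T'[measurable]: "?T' \<in> measurable M ?PI"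
    by (rule measurable_restrict) auto
  have sub: "{?T' -` C \<inter> space M | C. C \<in> sets ?PI} \<subseteq> {T -` B \<inter> space M | B. B \<in> sets (borel :: real measure)}"
  proof safe
    fix C :: "(nat \<Rightarrow> real) set" assume C: "C \<in> sets ?PI"
    have m: "(\<lambda>t::real. \<lambda>k\<in>{1::nat..}. t) \<in> measurable borel ?PI"
      by (rule measurable_restrict) auto
    show "\<exists>B. ?T' -` C \<inter> space M = T -` B \<inter> space M \<and> B \<in> sets borel"
      by (rule exI[of _ "(\<lambda>t::real. \<lambda>k\<in>{1::nat..}. t) -` C"]) (use measurable_sets_borel[OF m C] in auto)
  qed
  have ind': "indep_set {?T' -` C \<inter> space M | C. C \<in> sets ?PI} {?Xs -` C \<inter> space M | C. C \<in> sets ?PI}"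
    using ind unfolding indep_set_def
    by (rule indep_sets_mono_sets) (use sub in \<open>auto split: bool.split\<close>)
  have is1: "Int_stable {?T' -` B \<inter> space M | B. B \<in> sets ?PI}"
    unfolding Int_stable_def
  proof safe
    fix B1 B2 :: "(nat \<Rightarrow> real) set" assume "B1 \<in> sets ?PI" "B2 \<in> sets ?PI"
    then show "\<exists>B. (?T' -` B1 \<inter> space M) \<inter> (?T' -` B2 \<inter> space M) = ?T' -` B \<inter> space M \<and> B \<in> sets ?PI"
      by (intro exI[of _ "B1 \<inter> B2"]) auto
  qed
  have is2: "Int_stable {?Xs -` C \<inter> space M | C. C \<in> sets ?PI}"
    unfolding Int_stable_def
  proof safe
    fix B1 B2 :: "(nat \<Rightarrow> real) set" assume "B1 \<in> sets ?PI" "B2 \<in> sets ?PI"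
    then show "\<exists>B. (?Xs -` B1 \<inter> space M) \<inter> (?Xs -` B2 \<inter> space M) = ?Xs -` B \<inter> space M \<and> B \<in> sets ?PI"
      by (intro exI[of _ "B1 \<inter> B2"]) auto
  qed
  have iv: "indep_var ?PI ?T' ?PI ?Xs"
    unfolding indep_var_eq using indep_set_sigma_sets[OF ind' is1 is2] Xs T' by simp
  let ?sk = "\<lambda>\<xi>::nat\<Rightarrow>real. \<Sum>i\<in>{1..n}. \<xi> i"
  have sk[measurable]: "?sk \<in> borel_measurable ?PI"
    by (intro borel_measurable_sum measurable_component_singleton) auto
  have iv2: "indep_var borel ((\<lambda>\<xi>. \<xi> 1) \<circ> ?T') borel (?sk \<circ> ?Xs)"
    by (rule indep_var_compose[OF iv]) auto
  have T_eq: "(\<lambda>\<xi>. \<xi> 1) \<circ> ?T' = T" by (auto simp: fun_eq_iff)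
  have S_eq: "(?sk \<circ> ?Xs) = partial_sum X n"
    by (auto simp: partial_sum_def fun_eq_iff)
  let ?S = "partial_sum X n"
  have iv3: "indep_var borel T borel ?S" using iv2 S_eq T_eq by simp
  have S[measurable]: "?S \<in> borel_measurable M"
    using S_eq sk Xs by (metis measurable_comp)
  let ?PT = "distr M borel T" and ?PS = "distr M borel ?S"
  have jd: "?PT \<Otimes>\<^sub>M ?PS = distr M (borel \<Otimes>\<^sub>M borel) (\<lambda>w. (T w, ?S w))"
    using iv3 unfolding indep_var_distribution_eq by simp
  interpret PT: prob_space ?PT by (rule prob_space_distr) simp
  interpret PS: prob_space ?PS by (rule prob_space_distr) simp
  interpret PP: pair_prob_space ?PT ?PS ..
  let ?D = "{p::real\<times>real. snd p \<le> fst p}"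
  have "{p\<in>space (borel \<Otimes>\<^sub>M borel). snd p \<le> (fst p::real)} \<in> sets (borel \<Otimes>\<^sub>M borel)" by measurable
  then have D[measurable]: "?D \<in> sets (borel \<Otimes>\<^sub>M borel)" by (simp add: space_pair_measure)
  have "emeasure M {w\<in>space M. ?S w \<le> T w} = emeasure (distr M (borel \<Otimes>\<^sub>M borel) (\<lambda>w. (T w, ?S w))) ?D"
    by (subst emeasure_distr) (auto intro!: arg_cong[where f="emeasure M"])
  also have "\<dots> = emeasure (?PT \<Otimes>\<^sub>M ?PS) ?D" by (simp add: jd)
  also have "\<dots> = (\<integral>\<^sup>+s. emeasure ?PT ((\<lambda>t. (t, s)) -` ?D) \<partial>?PS)"
    by (rule PP.emeasure_pair_measure_alt2) simp
  also have "\<dots> = (\<integral>\<^sup>+s. ennreal (gT T s) \<partial>?PS)"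
  proof (rule nn_integral_cong)
    fix s
    have "emeasure ?PT ((\<lambda>t. (t, s)) -` ?D) = emeasure M (T -` {s..} \<inter> space M)"
      by (subst emeasure_distr) (auto intro!: arg_cong[where f="emeasure M"])
    also have "\<dots> = ennreal (gT T s)"
      unfolding gT_def by (subst emeasure_eq_measure) (auto intro!: arg_cong[where f="measure M"])
    finally show "emeasure ?PT ((\<lambda>t. (t, s)) -` ?D) = ennreal (gT T s)" .
  qed
  also have "\<dots> = (\<integral>\<^sup>+w. ennreal (gT T (?S w)) \<partial>M)"
    by (rule nn_integral_distr) auto
  also have "\<dots> = ennreal (\<integral>w. gT T (?S w) \<partial>M)"
    by (rule nn_integral_eq_integral) (auto intro!: integrable_const_bound[where B=1] simp: gT_bounds)
  finally have "emeasure M {w\<in>space M. ?S w \<le> T w} = ennreal (\<integral>w. gT T (?S w) \<partial>M)" .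
  moreover have "0 \<le> (\<integral>w. gT T (?S w) \<partial>M)" by (intro integral_nonneg_AE) (auto simp: gT_bounds)
  ultimately show ?thesis by (simp add: emeasure_eq_measure)
qed

end

definition mu' :: "(nat \<Rightarrow> real) set \<Rightarrow> ((nat \<Rightarrow> real) \<Rightarrow> (real \<times> real) measure) \<Rightarrow> (nat \<Rightarrow> real) \<Rightarrow> (real \<times> real) measure" where
  "mu' Nn \<mu> x = (if x \<in> Nn then \<mu> x else return borel (0, 0))"

lemma quadrant_borel[measurable]: "quadrant \<in> sets (borel :: (real \<times> real) measure)"
  unfolding quadrant_def by (intro borel_closed closed_Times) auto

lemma mu_quadrant:
  assumes P: "prob_space P" and s: "sets P = sets (borel :: (real\<times>real) measure)" and q: "emeasure P quadrant = 1"
    and A: "A \<in> sets (borel :: (real\<times>real) measure)"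
  shows "emeasure P A = emeasure P (A \<inter> quadrant)"
proof -
  interpret P: prob_space P by fact
  have "AE x in P. x \<in> quadrant"
    using q s by (intro P.AE_prob_1) (auto simp: P.emeasure_eq_measure)
  then show ?thesis
    by (intro emeasure_eq_AE) (use A s in auto)
qed

lemma mu'_measurable:
  assumes R: "is_rcd M X n Nn \<mu>"
  shows "mu' Nn \<mu> \<in> measurable (Rn n) (subprob_algebra (borel :: (real \<times> real) measure))"
proof (rule measurable_subprob_algebra)
  fix x assume "x \<in> space (Rn n)"
  show "subprob_space (mu' Nn \<mu> x)"
    using R unfolding mu'_def is_rcd_def
    by (auto intro: prob_space_imp_subprob_space subprob_space_return)
  show "sets (mu' Nn \<mu> x) = sets borel"
    using R unfolding mu'_def is_rcd_def by auto
next
  fix A :: "(real \<times> real) set" assume A: "A \<in> sets borel"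
  have Nn: "Nn \<in> sets (Rn n)" using R unfolding is_rcd_def by auto
  have e: "emeasure (mu' Nn \<mu> x) A = (if x \<in> Nn then emeasure (\<mu> x) (A \<inter> quadrant) else emeasure (return borel (0,0)) A)" for x
    using R A unfolding mu'_def is_rcd_def by (auto intro: mu_quadrant)
  have m1: "(\<lambda>x. emeasure (\<mu> x) (A \<inter> quadrant)) \<in> borel_measurable (restrict_space (Rn n) Nn)"
    using R A unfolding is_rcd_def by auto
  show "(\<lambda>x. emeasure (mu' Nn \<mu> x) A) \<in> borel_measurable (Rn n)"
    unfolding e
  proof (rule measurable_If_restrict_space_iff[where P="\<lambda>x. x \<in> Nn", THEN iffD2])
    have "{x \<in> space (Rn n). x \<in> Nn} = Nn" using sets.sets_into_space[OF Nn] by auto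
    then show "{x \<in> space (Rn n). x \<in> Nn} \<in> sets (Rn n)" using Nn by simp
    show "(\<lambda>x. emeasure (\<mu> x) (A \<inter> quadrant)) \<in> borel_measurable (restrict_space (Rn n) {x. x \<in> Nn}) \<and>
      (\<lambda>x. emeasure (return borel (0, 0)) A) \<in> borel_measurable (restrict_space (Rn n) {x. x \<notin> Nn})"
      using m1 by simp
  qed
qed

lemma is_rcdD:
  assumes "is_rcd M X n Nn \<mu>"
  shows "Nn \<in> sets (Rn n)" "measure M {w\<in>space M. first_n X n w \<in> Nn} = 1"
    "\<And>x. x \<in> Nn \<Longrightarrow> prob_space (\<mu> x)"
    "\<And>x. x \<in> Nn \<Longrightarrow> sets (\<mu> x) = sets (borel :: (real \<times> real) measure)"
    "\<And>x. x \<in> Nn \<Longrightarrow> emeasure (\<mu> x) quadrant = 1"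
    "\<And>A B. A \<in> sets (Rn n) \<Longrightarrow> A \<subseteq> Nn \<Longrightarrow> B \<in> sets (borel :: (real \<times> real) measure) \<Longrightarrow> B \<subseteq> quadrant \<Longrightarrow>
          emeasure M {w\<in>space M. first_n X n w \<in> A \<and> (X (n+1) w, X (n+2) w) \<in> B}
          = (\<integral>\<^sup>+ x. indicator A x * emeasure (\<mu> x) B \<partial>(distr M (Rn n) (first_n X n)))"
  using assms unfolding is_rcd_def by blast+

lemma first_n_measurable[measurable]:
  assumes X: "\<forall>k\<ge>1. X k \<in> borel_measurable M"
  shows "first_n X n \<in> measurable M (Rn n)"
  unfolding first_n_def by (rule measurable_restrict) (use X in auto)

context prob_space begin

lemma kernel_eq:
  assumes R: "is_rcd M X n Nn \<mu>"
    and X[measurable]: "\<forall>k\<ge>1. X k \<in> borel_measurable M" and nn: "\<forall>k\<ge>1. \<forall>w\<in>space M. 0 \<le> X k w"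
  shows "distr M (Rn n \<Otimes>\<^sub>M borel) (\<lambda>w. (first_n X n w, (X (n+1) w, X (n+2) w)))
       = Giry_Monad.bind (distr M (Rn n) (first_n X n)) (\<lambda>x. distr (mu' Nn \<mu> x) (Rn n \<Otimes>\<^sub>M borel) (Pair x))"
    (is "?Q = Giry_Monad.bind ?F ?N")
proof -
  have fn[measurable]: "first_n X n \<in> measurable M (Rn n)" using X by (rule first_n_measurable)
  have Xa[measurable]: "X (n+1) \<in> borel_measurable M" "X (n+2) \<in> borel_measurable M" using X by auto
  have Phi[measurable]: "(\<lambda>w. (first_n X n w, (X (n+1) w, X (n+2) w))) \<in> measurable M (Rn n \<Otimes>\<^sub>M borel)"
    by measurable
  have mu'[measurable]: "mu' Nn \<mu> \<in> measurable (Rn n) (subprob_algebra borel)"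
    by (rule mu'_measurable[OF R])
  have N[measurable]: "?N \<in> measurable ?F (subprob_algebra (Rn n \<Otimes>\<^sub>M borel))"
  proof (rule measurable_distr2[where M=borel])
    have "sets (?F \<Otimes>\<^sub>M borel) = sets (Rn n \<Otimes>\<^sub>M (borel :: (real\<times>real) measure))"
      by (rule sets_pair_measure_cong) auto
    then have "(\<lambda>z. z) \<in> measurable (?F \<Otimes>\<^sub>M borel) (Rn n \<Otimes>\<^sub>M (borel :: (real\<times>real) measure))"
      by (rule measurable_ident_sets)
    then show "(\<lambda>(x, y). (x, y)) \<in> measurable (?F \<Otimes>\<^sub>M borel) (Rn n \<Otimes>\<^sub>M (borel :: (real\<times>real) measure))"
      by (simp add: id_def)
    show "mu' Nn \<mu> \<in> measurable ?F (subprob_algebra borel)"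
      using mu' by (simp add: measurable_cong_sets[OF sets_distr refl])
  qed
  have Fne: "space ?F \<noteq> {}"
    using prob_space.not_empty[OF prob_space_distr[OF fn]] by simp
  have Nn[measurable]: "Nn \<in> sets (Rn n)" using R unfolding is_rcd_def by auto
  have Xp: "(\<lambda>w. (X (n+1) w, X (n+2) w)) \<in> borel_measurable M" by measurable
  have setsab: "{w\<in>space M. first_n X n w \<in> a \<and> (X (n+1) w, X (n+2) w) \<in> b} \<in> sets M"
    if "a \<in> sets (Rn n)" "b \<in> sets (borel :: (real\<times>real) measure)" for a b
  proof -
    have "{w\<in>space M. first_n X n w \<in> a \<and> (X (n+1) w, X (n+2) w) \<in> b} =
       (first_n X n -` a \<inter> space M) \<inter> ((\<lambda>w. (X (n+1) w, X (n+2) w)) -` b \<inter> space M)" by auto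
    then show ?thesis using measurable_sets[OF fn that(1)] measurable_sets[OF Xp that(2)] by auto
  qed
  have AENn: "AE x in ?F. x \<in> Nn"
  proof -
    have "AE w in M. w \<in> {w\<in>space M. first_n X n w \<in> Nn}"
      using R unfolding is_rcd_def by (intro AE_prob_1) auto
    then have "AE w in M. first_n X n w \<in> Nn" by auto
    moreover have "{x \<in> space (Rn n). x \<in> Nn} = Nn" using sets.sets_into_space[OF Nn] by auto
    ultimately show ?thesis by (subst AE_distr_iff[OF fn]) (use Nn in auto)
  qed
  show ?thesis
  proof (rule measure_eqI_generator_eq[OF Int_stable_pair_measure_generator pair_measure_closed])
    show "sets ?Q = sigma_sets (space (Rn n) \<times> space borel) {a \<times> b |a b. a \<in> sets (Rn n) \<and> b \<in> sets borel}"
      by (simp add: sets_pair_measure)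
    show "sets (Giry_Monad.bind ?F ?N) = sigma_sets (space (Rn n) \<times> space borel) {a \<times> b |a b. a \<in> sets (Rn n) \<and> b \<in> sets borel}"
      by (subst sets_bind[OF _ Fne, where N="Rn n \<Otimes>\<^sub>M borel"]) (auto simp: sets_pair_measure)
    show "range (\<lambda>i. space (Rn n) \<times> space borel) \<subseteq> {a \<times> b |a b. a \<in> sets (Rn n) \<and> b \<in> sets borel}"
      using sets.top[of "Rn n"] sets.top[of "borel :: (real\<times>real) measure"] by blast
    show "(\<Union>i. space (Rn n) \<times> space borel) = space (Rn n) \<times> space borel" by simp
    show "emeasure ?Q (space (Rn n) \<times> space borel) \<noteq> \<infinity>" for i :: nat
    proof -
      have "space (Rn n) \<times> space (borel :: (real\<times>real) measure) \<in> sets (Rn n \<Otimes>\<^sub>M borel)"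
        by simp
      then show ?thesis by (subst emeasure_distr[OF Phi]) (auto simp: emeasure_finite)
    qed
  next
    fix Z assume "Z \<in> {a \<times> b |a b. a \<in> sets (Rn n) \<and> b \<in> sets (borel :: (real\<times>real) measure)}"
    then obtain a b where Z: "Z = a \<times> b" and a[measurable]: "a \<in> sets (Rn n)" and b[measurable]: "b \<in> sets (borel :: (real\<times>real) measure)"
      by auto
    have ab: "a \<times> b \<in> sets (Rn n \<Otimes>\<^sub>M borel)" using a b by (rule pair_measureI)
    have "emeasure ?Q Z = emeasure M {w\<in>space M. first_n X n w \<in> a \<and> (X (n+1) w, X (n+2) w) \<in> b}"
      unfolding Z by (subst emeasure_distr[OF Phi ab]) (auto intro!: arg_cong[where f="emeasure M"])
    also have "\<dots> = emeasure M {w\<in>space M. first_n X n w \<in> a \<inter> Nn \<and> (X (n+1) w, X (n+2) w) \<in> b \<inter> quadrant}"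
    proof (rule emeasure_eq_AE)
      have "AE w in M. w \<in> {w\<in>space M. first_n X n w \<in> Nn}"
        using R unfolding is_rcd_def by (intro AE_prob_1) auto
      then show "AE w in M. (w \<in> {w\<in>space M. first_n X n w \<in> a \<and> (X (n+1) w, X (n+2) w) \<in> b}) =
          (w \<in> {w\<in>space M. first_n X n w \<in> a \<inter> Nn \<and> (X (n+1) w, X (n+2) w) \<in> b \<inter> quadrant})"
        by eventually_elim (use nn in \<open>auto simp: quadrant_def\<close>)
    next
      show "{w\<in>space M. first_n X n w \<in> a \<and> (X (n+1) w, X (n+2) w) \<in> b} \<in> sets M"
        using setsab[OF a b] .
      show "{w\<in>space M. first_n X n w \<in> a \<inter> Nn \<and> (X (n+1) w, X (n+2) w) \<in> b \<inter> quadrant} \<in> sets M"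
        using setsab[of "a \<inter> Nn" "b \<inter> quadrant"] a b Nn by auto
    qed
    also have "\<dots> = (\<integral>\<^sup>+x. indicator (a \<inter> Nn) x * emeasure (\<mu> x) (b \<inter> quadrant) \<partial>?F)"
      by (rule is_rcdD(6)[OF R]) (use a b Nn in auto)
    also have "\<dots> = (\<integral>\<^sup>+x. indicator a x * emeasure (mu' Nn \<mu> x) b \<partial>?F)"
    proof (rule nn_integral_cong_AE)
      show "AE x in ?F. indicator (a \<inter> Nn) x * emeasure (\<mu> x) (b \<inter> quadrant) = indicator a x * emeasure (mu' Nn \<mu> x) b"
        using AENn
      proof eventually_elim
        case (elim x)
        have "emeasure (\<mu> x) b = emeasure (\<mu> x) (b \<inter> quadrant)"
          using R elim b unfolding is_rcd_def by (intro mu_quadrant) auto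
        then show ?case using elim by (simp add: mu'_def indicator_def)
      qed
    qed
    also have "\<dots> = (\<integral>\<^sup>+x. emeasure (?N x) Z \<partial>?F)"
    proof (rule nn_integral_cong)
      fix x assume x: "x \<in> space ?F"
      have sx: "sets (mu' Nn \<mu> x) = sets borel"
        using R unfolding mu'_def is_rcd_def by auto
      then have sp: "space (mu' Nn \<mu> x) = UNIV" using sets_eq_imp_space_eq by fastforce
      have m: "Pair x \<in> measurable (mu' Nn \<mu> x) (Rn n \<Otimes>\<^sub>M borel)"
        using x by (simp add: measurable_cong_sets[OF sx refl])
      have "emeasure (?N x) Z = emeasure (mu' Nn \<mu> x) (Pair x -` Z \<inter> space (mu' Nn \<mu> x))"
        unfolding Z by (rule emeasure_distr[OF m ab])
      also have "\<dots> = indicator a x * emeasure (mu' Nn \<mu> x) b"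
        unfolding Z sp by (auto simp: indicator_def)
      finally show "indicator a x * emeasure (mu' Nn \<mu> x) b = emeasure (?N x) Z" ..
    qed
    also have "\<dots> = emeasure (Giry_Monad.bind ?F ?N) Z"
      by (rule emeasure_bind[symmetric, OF Fne N]) (use ab Z in auto)
    finally show "emeasure ?Q Z = emeasure (Giry_Monad.bind ?F ?N) Z" .
  qed
qed

lemma kern_N_measurable:
  assumes R: "is_rcd M X n Nn \<mu>"
    and X[measurable]: "\<forall>k\<ge>1. X k \<in> borel_measurable M"
  shows "(\<lambda>x. distr (mu' Nn \<mu> x) (Rn n \<Otimes>\<^sub>M borel) (Pair x)) \<in> measurable (distr M (Rn n) (first_n X n)) (subprob_algebra (Rn n \<Otimes>\<^sub>M borel))"
proof (rule measurable_distr2[where M=borel])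
  let ?F = "distr M (Rn n) (first_n X n)"
  have "sets (?F \<Otimes>\<^sub>M borel) = sets (Rn n \<Otimes>\<^sub>M (borel :: (real\<times>real) measure))"
    by (rule sets_pair_measure_cong) auto
  then have "(\<lambda>z. z) \<in> measurable (?F \<Otimes>\<^sub>M borel) (Rn n \<Otimes>\<^sub>M (borel :: (real\<times>real) measure))"
    by (rule measurable_ident_sets)
  then show "(\<lambda>(x, y). (x, y)) \<in> measurable (?F \<Otimes>\<^sub>M borel) (Rn n \<Otimes>\<^sub>M (borel :: (real\<times>real) measure))"
    by (simp add: id_def)
  show "mu' Nn \<mu> \<in> measurable ?F (subprob_algebra borel)"
    using mu'_measurable[OF R] by (simp add: measurable_cong_sets[OF sets_distr refl])
qed

lemma mu'_prob: assumes R: "is_rcd M X n Nn \<mu>" shows "prob_space (mu' Nn \<mu> x)" "sets (mu' Nn \<mu> x) = sets (borel :: (real \<times> real) measure)"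
  using R unfolding mu'_def is_rcd_def by (auto intro: prob_space_return)

lemma kernel_integral:
  fixes h :: "(nat \<Rightarrow> real) \<times> (real \<times> real) \<Rightarrow> real"
  assumes R: "is_rcd M X n Nn \<mu>"
    and X[measurable]: "\<forall>k\<ge>1. X k \<in> borel_measurable M" and nn: "\<forall>k\<ge>1. \<forall>w\<in>space M. 0 \<le> X k w"
    and h[measurable]: "h \<in> borel_measurable (Rn n \<Otimes>\<^sub>M borel)" and hb: "\<And>z. \<bar>h z\<bar> \<le> 1"
  shows "(\<integral>w. h (first_n X n w, (X (n+1) w, X (n+2) w)) \<partial>M)
       = (\<integral>x. (\<integral>p. h (x, p) \<partial>mu' Nn \<mu> x) \<partial>distr M (Rn n) (first_n X n))"
proof -
  let ?F = "distr M (Rn n) (first_n X n)"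
  let ?N = "\<lambda>x. distr (mu' Nn \<mu> x) (Rn n \<Otimes>\<^sub>M borel) (Pair x)"
  have fn[measurable]: "first_n X n \<in> measurable M (Rn n)" using X by (rule first_n_measurable)
  have Xa[measurable]: "X (n+1) \<in> borel_measurable M" "X (n+2) \<in> borel_measurable M" using X by auto
  have Phi[measurable]: "(\<lambda>w. (first_n X n w, (X (n+1) w, X (n+2) w))) \<in> measurable M (Rn n \<Otimes>\<^sub>M borel)"
    by measurable
  have N: "?N \<in> measurable ?F (subprob_algebra (Rn n \<Otimes>\<^sub>M borel))"
    by (rule kern_N_measurable[OF R X])
  interpret F: prob_space ?F by (rule prob_space_distr[OF fn])
  have "(\<integral>w. h (first_n X n w, (X (n+1) w, X (n+2) w)) \<partial>M)
      = (\<integral>z. h z \<partial>distr M (Rn n \<Otimes>\<^sub>M borel) (\<lambda>w. (first_n X n w, (X (n+1) w, X (n+2) w))))"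
    by (rule integral_distr[OF Phi h, symmetric])
  also have "\<dots> = (\<integral>z. h z \<partial>Giry_Monad.bind ?F ?N)"
    by (simp only: kernel_eq[OF R X nn])
  also have "\<dots> = (\<integral>x. (\<integral>z. h z \<partial>?N x) \<partial>?F)"
  proof (rule integral_bind[OF h _ N])
    show "\<bar>h z\<bar> \<le> 1" for z by (rule hb)
    show "finite_measure ?F" by (rule F.finite_measure_axioms)
    show "AE x in ?F. emeasure (?N x) (space (?N x)) \<le> ennreal 1"
    proof (rule AE_I2)
      fix x assume x: "x \<in> space ?F"
      interpret P: prob_space "mu' Nn \<mu> x" by (rule mu'_prob[OF R])
      have sx: "sets (mu' Nn \<mu> x) = sets borel" by (rule mu'_prob[OF R])
      have m: "Pair x \<in> measurable (mu' Nn \<mu> x) (Rn n \<Otimes>\<^sub>M borel)"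
        using x by (simp add: measurable_cong_sets[OF sx refl])
      have "emeasure (?N x) (space (?N x)) = emeasure (mu' Nn \<mu> x) (Pair x -` space (Rn n \<Otimes>\<^sub>M borel) \<inter> space (mu' Nn \<mu> x))"
        by (simp only: space_distr emeasure_distr[OF m sets.top])
      also have "\<dots> \<le> emeasure (mu' Nn \<mu> x) (space (mu' Nn \<mu> x))"
        by (rule emeasure_mono) auto
      finally show "emeasure (?N x) (space (?N x)) \<le> ennreal 1"
        by (simp add: P.emeasure_space_1)
    qed
  qed
  also have "\<dots> = (\<integral>x. (\<integral>p. h (x, p) \<partial>mu' Nn \<mu> x) \<partial>?F)"
  proof (rule Bochner_Integration.integral_cong[OF refl])
    fix x assume x: "x \<in> space ?F"
    have sx: "sets (mu' Nn \<mu> x) = sets borel" by (rule mu'_prob[OF R])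
    have m: "Pair x \<in> measurable (mu' Nn \<mu> x) (Rn n \<Otimes>\<^sub>M borel)"
      using x by (simp add: measurable_cong_sets[OF sx refl])
    show "(\<integral>z. h z \<partial>?N x) = (\<integral>p. h (x, p) \<partial>mu' Nn \<mu> x)"
      by (rule integral_distr[OF m h])
  qed
  finally show ?thesis .
qed

end

lemma counting_ge_iff:
  fixes X :: "nat \<Rightarrow> 'a \<Rightarrow> real"
  assumes nn: "\<And>k. k \<ge> 1 \<Longrightarrow> 0 \<le> X k w" and t: "0 \<le> t"
  shows "enat n \<le> counting X t w \<longleftrightarrow> partial_sum X n w \<le> t"
proof -
  have stp: "partial_sum X j w \<le> partial_sum X (Suc j) w" for j
    using nn[of "Suc j"] by (simp add: partial_sum_def)
  have mono: "partial_sum X i w \<le> partial_sum X j w" if "i \<le> j" for i j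
    using that
  proof (induction j rule: dec_induct)
    case (step j) then show ?case using stp[of j] by linarith
  qed simp
  let ?A = "{enat k | k. partial_sum X k w \<le> t}"
  show ?thesis
  proof
    assume "partial_sum X n w \<le> t"
    then have "enat n \<in> ?A" by blast
    then show "enat n \<le> counting X t w" unfolding counting_def by (rule Sup_upper)
  next
    assume h: "enat n \<le> counting X t w"
    show "partial_sum X n w \<le> t"
    proof (rule ccontr)
      assume "\<not> partial_sum X n w \<le> t"
      have kn: "k < n" if "partial_sum X k w \<le> t" for k
      proof (rule ccontr)
        assume "\<not> k < n"
        then have "partial_sum X n w \<le> partial_sum X k w" using mono by simp
        then show False using that \<open>\<not> partial_sum X n w \<le> t\<close> by linarith
      qed
      then have "\<forall>k\<in>{k. partial_sum X k w \<le> t}. k < n" by blast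
      then have "\<forall>x\<in>?A. x \<le> enat (n - 1)" by auto
      then have "counting X t w \<le> enat (n - 1)" unfolding counting_def by (simp add: Sup_le_iff)
      moreover have "0 < n"
      proof (rule ccontr)
        assume "\<not> 0 < n" then have "n = 0" by simp
        then show False using \<open>\<not> partial_sum X n w \<le> t\<close> t by (simp add: partial_sum_def)
      qed
      ultimately have "enat n \<le> enat (n - 1)" "0 < n" using h order_trans by blast+
      then show False by simp
    qed
  qed
qed


context prob_space begin

lemma AE_Nn:
  assumes R: "is_rcd M X n Nn \<mu>" and X: "\<forall>k\<ge>1. X k \<in> borel_measurable M"
  shows "AE x in distr M (Rn n) (first_n X n). x \<in> Nn"
proof -
  have fn[measurable]: "first_n X n \<in> measurable M (Rn n)" using X by (rule first_n_measurable)
  have Nn: "Nn \<in> sets (Rn n)" by (rule is_rcdD(1)[OF R])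
  have "AE w in M. w \<in> {w\<in>space M. first_n X n w \<in> Nn}"
    using is_rcdD(2)[OF R] by (intro AE_prob_1) auto
  then have "AE w in M. first_n X n w \<in> Nn" by auto
  moreover have "{x \<in> space (Rn n). x \<in> Nn} = Nn" using sets.sets_into_space[OF Nn] by auto
  ultimately show ?thesis by (subst AE_distr_iff[OF fn]) (use Nn in auto)
qed

lemma kern_fun_measurable:
  fixes h :: "(nat \<Rightarrow> real) \<times> (real \<times> real) \<Rightarrow> real"
  assumes R: "is_rcd M X n Nn \<mu>" and X: "\<forall>k\<ge>1. X k \<in> borel_measurable M"
    and h[measurable]: "h \<in> borel_measurable (Rn n \<Otimes>\<^sub>M borel)"
  shows "(\<lambda>x. \<integral>p. h (x, p) \<partial>mu' Nn \<mu> x) \<in> borel_measurable (distr M (Rn n) (first_n X n))"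
proof -
  let ?F = "distr M (Rn n) (first_n X n)"
  let ?N = "\<lambda>x. distr (mu' Nn \<mu> x) (Rn n \<Otimes>\<^sub>M borel) (Pair x)"
  have "(\<lambda>x. \<integral>z. h z \<partial>?N x) \<in> borel_measurable ?F"
    by (rule measurable_compose[OF kern_N_measurable[OF R X] integral_measurable_subprob_algebra[OF h]])
  then show ?thesis
  proof (rule measurable_cong[THEN iffD1, rotated])
    fix x assume x: "x \<in> space ?F"
    have sx: "sets (mu' Nn \<mu> x) = sets borel" by (rule mu'_prob[OF R])
    have m: "Pair x \<in> measurable (mu' Nn \<mu> x) (Rn n \<Otimes>\<^sub>M borel)"
      using x by (simp add: measurable_cong_sets[OF sx refl])
    show "(\<integral>z. h z \<partial>?N x) = (\<integral>p. h (x, p) \<partial>mu' Nn \<mu> x)"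
      by (rule integral_distr[OF m h])
  qed
qed

end

lemma int_01:
  fixes f :: "'b \<Rightarrow> real"
  assumes P: "prob_space P" and [measurable]: "f \<in> borel_measurable P" and b: "\<And>x. 0 \<le> f x \<and> f x \<le> 1"
  shows "0 \<le> (\<integral>x. f x \<partial>P) \<and> (\<integral>x. f x \<partial>P) \<le> 1"
proof -
  interpret prob_space P by fact
  have i: "integrable P f" by (rule integrable_const_bound[where B=1]) (use b in auto)
  have "(\<integral>x. f x \<partial>P) \<le> (\<integral>x. 1 \<partial>P)" by (rule integral_mono[OF i]) (use b in auto)
  then show ?thesis using b by (auto intro!: integral_nonneg_AE simp: prob_space)
qed

theorem corollary5p3:
  fixes M :: "'a measure" and X :: "nat \<Rightarrow> 'a \<Rightarrow> real" and T :: "'a \<Rightarrow> real"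
  assumes "prob_space M"
    and "\<forall>k\<ge>1. X k \<in> borel_measurable M"
    and "\<forall>k\<ge>1. \<forall>w\<in>space M. 0 \<le> X k w"
    and "T \<in> borel_measurable M"
    and "\<forall>w\<in>space M. 0 \<le> T w"
    and "prob_space.indep_set M
           {T -` B \<inter> space M | B. B \<in> sets (borel :: real measure)}
           {(\<lambda>w. \<lambda>k\<in>{1..}. X k w) -` C \<inter> space M | C. C \<in> sets (PiM {1..} (\<lambda>_. (borel :: real measure)))}"
    and a: "DFR M T"
    and b: "\<not> (measure M {w\<in>space M. T w = 0} > 0 \<and> measure M {w\<in>space M. X 1 w = 0} > 0)"
    and c: "associated M (\<lambda>w. (X 1 w, X 2 w))" "st_le M (X 2) (X 1)"
    and d: "\<forall>n\<ge>1. \<exists>Nn \<mu>. is_rcd M X n Nn \<mu> \<and>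
               (\<forall>x\<in>Nn. associated (\<mu> x) (\<lambda>p. p) \<and> st_le (\<mu> x) snd fst)"
  shows "disc_DFR M (\<lambda>w. counting X (T w) w)"
proof -
  interpret prob_space M by fact
  note X = assms(2) and nn = assms(3) and T = assms(4) and Tnn = assms(5) and ind = assms(6)
  have Xm: "X k \<in> borel_measurable M" if "k \<ge> 1" for k using X that by auto
  have Tm[measurable]: "T \<in> borel_measurable M" by (rule T)
  define a where "a k = measure M {w\<in>space M. counting X (T w) w \<ge> enat k}" for k
  have aeq: "a k = (\<integral>w. gT T (partial_sum X k w) \<partial>M)" for k
  proof -
    have "{w\<in>space M. counting X (T w) w \<ge> enat k} = {w\<in>space M. partial_sum X k w \<le> T w}"
    proof (intro Collect_cong conj_cong refl)
      fix w assume "w \<in> space M"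
      then show "(counting X (T w) w \<ge> enat k) = (partial_sum X k w \<le> T w)"
        using counting_ge_iff[of X w "T w" k] nn Tnn by auto
    qed
    then show ?thesis unfolding a_def using indep_T_sum[OF X T ind] by simp
  qed
  have main: "(a (n+1))\<^sup>2 \<le> a n * a (n+2)" for n
  proof (cases "n = 0")
    case True
    have p0: "partial_sum X 0 w = 0" for w by (simp add: partial_sum_def)
    have p1: "partial_sum X 1 w = 0 + X 1 w" for w by (simp add: partial_sum_def)
    have p2: "partial_sum X 2 w = 0 + X 1 w + X 2 w" for w by (simp add: partial_sum_def eval_nat_numeral)
    have a0: "a 0 = gT T 0" by (simp add: aeq p0 prob_space)
    have nnAE: "AE w in M. 0 \<le> X 1 w \<and> 0 \<le> X 2 w" using nn by auto
    have "(\<integral>w. gT T (0 + X 1 w) \<partial>M)\<^sup>2 \<le> gT T 0 * (\<integral>w. gT T (0 + X 1 w + X 2 w) \<partial>M)"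
      by (rule pointwise_ineq[OF Tm a assms(1) Xm Xm nnAE c(1) c(2)]) auto
    moreover have "a 1 = (\<integral>w. gT T (0 + X 1 w) \<partial>M)" by (simp only: aeq p1)
    moreover have "a 2 = (\<integral>w. gT T (0 + X 1 w + X 2 w) \<partial>M)" by (simp only: aeq p2)
    ultimately show ?thesis using True a0 by (simp add: numeral_2_eq_2)
  next
    case False
    then have n1: "n \<ge> 1" by simp
    obtain Nn \<mu> where R: "is_rcd M X n Nn \<mu>"
      and ass: "\<And>x. x \<in> Nn \<Longrightarrow> associated (\<mu> x) (\<lambda>p. p) \<and> st_le (\<mu> x) snd fst"
      using d n1 by blast
    have Nnn: "Nn \<subseteq> {x. \<forall>i\<in>{1..n}. 0 \<le> x i}" by (rule conjunct1[OF conjunct2[OF R[unfolded is_rcd_def]]])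
    let ?F = "distr M (Rn n) (first_n X n)"
    have fn[measurable]: "first_n X n \<in> measurable M (Rn n)" using X by (rule first_n_measurable)
    interpret F: prob_space ?F by (rule prob_space_distr[OF fn])
    define sx where "sx x = (\<Sum>i\<in>{1..n}. x i)" for x :: "nat \<Rightarrow> real"
    have sxm[measurable]: "sx \<in> borel_measurable (Rn n)"
      unfolding sx_def[abs_def] by (intro borel_measurable_sum measurable_component_singleton) auto
    have psn: "partial_sum X n w = sx (first_n X n w)" for w
      by (simp add: partial_sum_def first_n_def sx_def)
    have psn1: "partial_sum X (n+1) w = sx (first_n X n w) + fst (X (n+1) w, X (n+2) w)" for w
      by (simp add: psn[symmetric]) (simp add: partial_sum_def)
    have psn2: "partial_sum X (n+2) w = sx (first_n X n w) + fst (X (n+1) w, X (n+2) w) + snd (X (n+1) w, X (n+2) w)" for w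
      by (simp add: psn[symmetric]) (simp add: partial_sum_def add.assoc)
    define f0 where "f0 x = gT T (sx x)" for x
    define f1 where "f1 x = (\<integral>p. gT T (sx x + fst p) \<partial>mu' Nn \<mu> x)" for x
    define f2 where "f2 x = (\<integral>p. gT T (sx x + fst p + snd p) \<partial>mu' Nn \<mu> x)" for x
    let ?h1 = "\<lambda>z :: (nat \<Rightarrow> real) \<times> (real \<times> real). gT T (sx (fst z) + fst (snd z))"
    let ?h2 = "\<lambda>z :: (nat \<Rightarrow> real) \<times> (real \<times> real). gT T (sx (fst z) + fst (snd z) + snd (snd z))"
    have i1: "(\<lambda>z :: (nat \<Rightarrow> real) \<times> (real \<times> real). sx (fst z) + fst (snd z)) \<in> borel_measurable (Rn n \<Otimes>\<^sub>M borel)"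
      unfolding borel_prod[symmetric] by measurable
    have h1[measurable]: "?h1 \<in> borel_measurable (Rn n \<Otimes>\<^sub>M borel)"
      by (rule measurable_compose[OF i1 gT_measurable[OF Tm]])
    have i2: "(\<lambda>z :: (nat \<Rightarrow> real) \<times> (real \<times> real). sx (fst z) + fst (snd z) + snd (snd z)) \<in> borel_measurable (Rn n \<Otimes>\<^sub>M borel)"
      unfolding borel_prod[symmetric] by measurable
    have h2[measurable]: "?h2 \<in> borel_measurable (Rn n \<Otimes>\<^sub>M borel)"
      by (rule measurable_compose[OF i2 gT_measurable[OF Tm]])
    have l1: "(\<lambda>p::real\<times>real. c + fst p) \<in> borel_measurable borel" for c
      unfolding borel_prod[symmetric] by measurable
    have l2: "(\<lambda>p::real\<times>real. c + fst p + snd p) \<in> borel_measurable borel" for c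
      unfolding borel_prod[symmetric] by measurable
    have gm1: "(\<lambda>p::real\<times>real. gT T (c + fst p)) \<in> borel_measurable borel" for c
      by (rule measurable_compose[OF l1 gT_measurable[OF Tm]])
    have gm2: "(\<lambda>p::real\<times>real. gT T (c + fst p + snd p)) \<in> borel_measurable borel" for c
      by (rule measurable_compose[OF l2 gT_measurable[OF Tm]])
    have fsm1: "fst \<in> borel_measurable (borel :: (real\<times>real) measure)"
      unfolding borel_prod[symmetric] by (rule measurable_fst)
    have fsm2: "snd \<in> borel_measurable (borel :: (real\<times>real) measure)"
      unfolding borel_prod[symmetric] by (rule measurable_snd)
    note fsm = fsm1 fsm2
    have gb: "\<bar>gT T u\<bar> \<le> 1" for u using gT_bounds[of T u] by auto
    have an: "a n = (\<integral>x. f0 x \<partial>?F)"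
      unfolding aeq psn f0_def by (rule integral_distr[OF fn measurable_compose[OF sxm gT_measurable[OF Tm]], symmetric])
    have an1: "a (n+1) = (\<integral>x. f1 x \<partial>?F)"
      unfolding aeq psn1 f1_def using kernel_integral[OF R X nn h1 gb] by simp
    have an2: "a (n+2) = (\<integral>x. f2 x \<partial>?F)"
      unfolding aeq psn2 f2_def using kernel_integral[OF R X nn h2 gb] by simp
    have f0m[measurable]: "f0 \<in> borel_measurable ?F"
      unfolding f0_def[abs_def] using measurable_compose[OF sxm gT_measurable[OF Tm]]
      by (simp add: measurable_cong_sets[OF sets_distr refl])
    have f1m[measurable]: "f1 \<in> borel_measurable ?F"
      using kern_fun_measurable[OF R X h1] unfolding f1_def[abs_def] by simp
    have f2m[measurable]: "f2 \<in> borel_measurable ?F"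
      using kern_fun_measurable[OF R X h2] unfolding f2_def[abs_def] by simp
    have bnds: "0 \<le> f0 x \<and> f0 x \<le> 1 \<and> 0 \<le> f1 x \<and> f1 x \<le> 1 \<and> 0 \<le> f2 x \<and> f2 x \<le> 1" for x
    proof -
      have P: "prob_space (mu' Nn \<mu> x)" by (rule mu'_prob[OF R])
      have sx: "sets (mu' Nn \<mu> x) = sets borel" by (rule mu'_prob[OF R])
      have m1: "(\<lambda>p. gT T (sx x + fst p)) \<in> borel_measurable (mu' Nn \<mu> x)"
        using gm1 by (simp add: measurable_cong_sets[OF sx refl])
      have m2: "(\<lambda>p. gT T (sx x + fst p + snd p)) \<in> borel_measurable (mu' Nn \<mu> x)"
        using gm2 by (simp add: measurable_cong_sets[OF sx refl])
      show ?thesis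
        using int_01[OF P m1] int_01[OF P m2] gT_bounds[of T]
        unfolding f0_def f1_def f2_def by auto
    qed
    have ae: "AE x in ?F. (f1 x)\<^sup>2 \<le> f0 x * f2 x"
      using AE_Nn[OF R X]
    proof eventually_elim
      case (elim x)
      have mux: "mu' Nn \<mu> x = \<mu> x" using elim by (simp add: mu'_def)
      have P: "prob_space (\<mu> x)" using is_rcdD(3)[OF R elim] .
      have sx: "sets (\<mu> x) = sets borel" using is_rcdD(4)[OF R elim] .
      have q: "emeasure (\<mu> x) quadrant = 1" using is_rcdD(5)[OF R elim] .
      have fm: "fst \<in> borel_measurable (\<mu> x)" "snd \<in> borel_measurable (\<mu> x)"
        using fsm by (simp_all add: measurable_cong_sets[OF sx refl])
      have aq: "AE p in \<mu> x. 0 \<le> fst p \<and> 0 \<le> snd p"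
      proof -
        interpret Pm: prob_space "\<mu> x" by (rule P)
        have "AE p in \<mu> x. p \<in> quadrant"
          using q sx by (intro Pm.AE_prob_1) (auto simp: Pm.emeasure_eq_measure)
        then show ?thesis by eventually_elim (auto simp: quadrant_def)
      qed
      have as: "associated (\<mu> x) (\<lambda>p. (fst p, snd p))" using ass[OF elim] by simp
      have st: "st_le (\<mu> x) snd fst" using ass[OF elim] by simp
      have s0: "0 \<le> sx x"
        using elim Nnn unfolding sx_def by (auto intro!: sum_nonneg)
      show ?case
        using pointwise_ineq[OF Tm a P fm aq as st s0]
        unfolding f0_def f1_def f2_def mux by simp
    qed
    have "(\<integral>x. f1 x \<partial>?F)\<^sup>2 \<le> (\<integral>x. f0 x \<partial>?F) * (\<integral>x. f2 x \<partial>?F)"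
      by (rule CS_like[OF F.prob_space_axioms f0m f1m f2m bnds ae])
    then show ?thesis by (simp only: an an1 an2)
  qed
  show ?thesis
    unfolding disc_DFR_def
  proof
    fix n
    show "(measure M {w \<in> space M. enat (n + 1) \<le> counting X (T w) w})\<^sup>2
        \<le> measure M {w \<in> space M. enat n \<le> counting X (T w) w} *
          measure M {w \<in> space M. enat (n + 2) \<le> counting X (T w) w}"
      using main[of n] unfolding a_def .
  qed
qed

end
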